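(* Let $G$ be a complete edge-colored graph such that for each strong module $M$ of $G$ the quotient graph $G[M]/\mathbb{P}_{\max}(M)$ is a complete edge-colored permutation graph. Then $G$ is a complete edge-colored permutation graph.
   Context: A complete $k$-edge-colored graph $G=(V,E_1,\dots,E_k)$ is the complete graph on a finite set $V$ with edges partitioned into $k$ nonempty color classes $E_i$ (the one-vertex graph also counts); $G_{|i}=(V,E_i)$. A labeling is a bijection $\ell:V\to\{1,\dots,|V|\}$. A graph $(V,E)$ with labeling $\ell$ is a simple permutation graph of a permutation $\pi$ if for all $u,v$ with $\ell(u)>\ell(v)$: $\{u,v\}\in E$ iff $\pi^{-1}(\ell(u))<\pi^{-1}(\ell(v))$. $G$ is a complete edge-colored permutation graph if there exist a labeling $\ell$ and permutations $\pi_1,\dots,\pi_k$ with $(G_{|i},\ell)$ a simple permutation graph of $\pi_i$ for all $i$. A module is a set $M\subseteq V$ such that for every $v\notin M$ all edges $\{u,v\}$, $u\in M$, have the same color; a strong module is a nonempty module comparable by inclusion or disjoint with every other module. For a strong module $M$ with $|M|\ge2$, $\mathbb{P}_{\max}(M)$ is the set of inclusion-maximal strong modules properly contained in $M$, and $G[M]/\mathbb{P}_{\max}(M)$ is the complete graph on $\mathbb{P}_{\max}(M)$ with $\{M_a,M_b\}$ colored by the common color of all edges between $M_a$ and $M_b$; for $|M|=1$ it is the one-vertex graph. *)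

theory Defs
  imports Main "HOL-Combinatorics.Permutations"
begin

definition complete_edge_colored :: "'a set \<Rightarrow> ('a \<Rightarrow> 'a \<Rightarrow> 'c) \<Rightarrow> bool" where
  "complete_edge_colored V c \<longleftrightarrow> finite V \<and> V \<noteq> {} \<and>
     (\<forall>u\<in>V. \<forall>v\<in>V. u \<noteq> v \<longrightarrow> c u v = c v u)"

definition colors :: "'a set \<Rightarrow> ('a \<Rightarrow> 'a \<Rightarrow> 'c) \<Rightarrow> 'c set" where
  "colors V c = {c u v | u v. u \<in> V \<and> v \<in> V \<and> u \<noteq> v}"

definition simple_perm_graph ::
  "'a set \<Rightarrow> ('a \<Rightarrow> 'a \<Rightarrow> bool) \<Rightarrow> ('a \<Rightarrow> nat) \<Rightarrow> (nat \<Rightarrow> nat) \<Rightarrow> bool" where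
  "simple_perm_graph V E l \<pi> \<longleftrightarrow>
     (\<forall>u\<in>V. \<forall>v\<in>V. l u > l v \<longrightarrow> (E u v \<longleftrightarrow> inv \<pi> (l u) < inv \<pi> (l v)))"

definition ce_perm_graph :: "'a set \<Rightarrow> ('a \<Rightarrow> 'a \<Rightarrow> 'c) \<Rightarrow> bool" where
  "ce_perm_graph V c \<longleftrightarrow>
     (\<exists>l. bij_betw l V {1..card V} \<and>
        (\<forall>i\<in>colors V c. \<exists>\<pi>. \<pi> permutes {1..card V} \<and>
            simple_perm_graph V (\<lambda>u v. c u v = i) l \<pi>))"

definition is_module :: "'a set \<Rightarrow> ('a \<Rightarrow> 'a \<Rightarrow> 'c) \<Rightarrow> 'a set \<Rightarrow> bool" where
  "is_module V c M \<longleftrightarrow> M \<subseteq> V \<and>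
     (\<forall>v\<in>V - M. \<forall>u\<in>M. \<forall>u'\<in>M. c u v = c u' v)"

definition strong_module :: "'a set \<Rightarrow> ('a \<Rightarrow> 'a \<Rightarrow> 'c) \<Rightarrow> 'a set \<Rightarrow> bool" where
  "strong_module V c M \<longleftrightarrow> M \<noteq> {} \<and> is_module V c M \<and>
     (\<forall>M'. is_module V c M' \<longrightarrow> M \<subseteq> M' \<or> M' \<subseteq> M \<or> M \<inter> M' = {})"

definition Pmax :: "'a set \<Rightarrow> ('a \<Rightarrow> 'a \<Rightarrow> 'c) \<Rightarrow> 'a set \<Rightarrow> 'a set set" where
  "Pmax V c M = {M'. strong_module V c M' \<and> M' \<subset> M \<and>
      (\<forall>M''. strong_module V c M'' \<and> M'' \<subset> M \<longrightarrow> \<not> M' \<subset> M'')}"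

text \<open>Quotient graph G[M]/Pmax(M): vertices are the maximal strong modules; the
  colour of {Ma,Mb} is the colour of an (any) edge between Ma and Mb. For |M| = 1
  it is the one-vertex graph on {M}.\<close>
definition quot_vertices :: "'a set \<Rightarrow> ('a \<Rightarrow> 'a \<Rightarrow> 'c) \<Rightarrow> 'a set \<Rightarrow> 'a set set" where
  "quot_vertices V c M = (if card M = 1 then {M} else Pmax V c M)"

definition quot_color :: "('a \<Rightarrow> 'a \<Rightarrow> 'c) \<Rightarrow> 'a set \<Rightarrow> 'a set \<Rightarrow> 'c" where
  "quot_color c X Y = c (SOME x. x \<in> X) (SOME y. y \<in> Y)"

end

theory Submission
  imports Defs
begin

locale ceg =
  fixes V :: "'a set" and c :: "'a \<Rightarrow> 'a \<Rightarrow> 'c"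
  assumes ceg: "complete_edge_colored V c"
begin

lemma finV: "finite V" and neV: "V \<noteq> {}" and symc: "\<And>u v. u \<in> V \<Longrightarrow> v \<in> V \<Longrightarrow> u \<noteq> v \<Longrightarrow> c u v = c v u"
  using ceg unfolding complete_edge_colored_def by auto

lemma strong_sub: "strong_module V c M \<Longrightarrow> M \<subseteq> V"
  unfolding strong_module_def is_module_def by auto

lemma strong_fin: "strong_module V c M \<Longrightarrow> finite M"
  using strong_sub finV finite_subset by blast

lemma strong_cmp: "strong_module V c M \<Longrightarrow> strong_module V c M' \<Longrightarrow> M \<inter> M' \<noteq> {} \<Longrightarrow> M \<subseteq> M' \<or> M' \<subseteq> M"
  unfolding strong_module_def by blast

lemma strong_V: "strong_module V c V"
  using neV unfolding strong_module_def is_module_def by auto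

lemma strong_single: "u \<in> V \<Longrightarrow> strong_module V c {u}"
  unfolding strong_module_def is_module_def by auto

definition cs :: "'a \<Rightarrow> 'a \<Rightarrow> 'a set set" where
  "cs u v = {M. strong_module V c M \<and> u \<in> M \<and> v \<in> M}"

definition lca :: "'a \<Rightarrow> 'a \<Rightarrow> 'a set" where
  "lca u v = (SOME M. M \<in> cs u v \<and> (\<forall>M'\<in>cs u v. M \<subseteq> M'))"

definition ch :: "'a set \<Rightarrow> 'a \<Rightarrow> 'a set" where
  "ch M u = (SOME X. X \<in> Pmax V c M \<and> u \<in> X)"

lemma lca_ex: assumes "u \<in> V" "v \<in> V" shows "\<exists>M. M \<in> cs u v \<and> (\<forall>M'\<in>cs u v. M \<subseteq> M')"
proof -
  have "V \<in> cs u v" using assms strong_V unfolding cs_def by auto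
  then obtain M where M: "M \<in> cs u v" "\<forall>M'. M' \<in> cs u v \<longrightarrow> card M \<le> card M'"
    using ex_has_least_nat[of "\<lambda>M. M \<in> cs u v" V card] by blast
  have "\<forall>M'\<in>cs u v. M \<subseteq> M'"
  proof
    fix M' assume M': "M' \<in> cs u v"
    have "M \<subseteq> M' \<or> M' \<subseteq> M" using M(1) M' strong_cmp unfolding cs_def by blast
    moreover have "M' = M" if sub: "M' \<subseteq> M"
    proof -
      have fM: "finite M" using M(1) strong_fin unfolding cs_def by blast
      then have "card M' \<le> card M" using sub by (rule card_mono)
      with M(2) M' have "card M' = card M" by fastforce
      with fM sub show ?thesis by (rule card_subset_eq)
    qed
    ultimately show "M \<subseteq> M'" by blast
  qed
  with M show ?thesis by blast
qed

lemma lca: assumes "u \<in> V" "v \<in> V"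
  shows "strong_module V c (lca u v)" "u \<in> lca u v" "v \<in> lca u v"
    "\<And>M'. strong_module V c M' \<Longrightarrow> u \<in> M' \<Longrightarrow> v \<in> M' \<Longrightarrow> lca u v \<subseteq> M'"
proof -
  have "lca u v \<in> cs u v \<and> (\<forall>M'\<in>cs u v. lca u v \<subseteq> M')"
    unfolding lca_def using someI_ex[OF lca_ex[OF assms]] .
  then show "strong_module V c (lca u v)" "u \<in> lca u v" "v \<in> lca u v"
    "\<And>M'. strong_module V c M' \<Longrightarrow> u \<in> M' \<Longrightarrow> v \<in> M' \<Longrightarrow> lca u v \<subseteq> M'"
    unfolding cs_def by auto
qed

lemma lca_sym: "lca u v = lca v u"
proof -
  have "cs u v = cs v u" unfolding cs_def by auto
  then show ?thesis unfolding lca_def by simp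
qed

lemma child_ex: assumes "strong_module V c M" "u \<in> M" "M \<noteq> {u}"
  shows "\<exists>X\<in>Pmax V c M. u \<in> X"
proof -
  let ?T = "{X. strong_module V c X \<and> u \<in> X \<and> X \<subset> M}"
  have uV: "u \<in> V" using assms strong_sub by blast
  have "{u} \<in> ?T" using assms strong_single[OF uV] by auto
  moreover have "\<forall>X. X \<in> ?T \<longrightarrow> card X < Suc (card V)"
    using finV by (auto simp: less_Suc_eq_le intro!: card_mono dest!: strong_sub)
  ultimately obtain X where X: "X \<in> ?T" "\<forall>Y. Y \<in> ?T \<longrightarrow> card Y \<le> card X"
    using ex_has_greatest_nat[of "\<lambda>X. X \<in> ?T" "{u}" card "Suc (card V)"] by blast
  have "X \<in> Pmax V c M"
    unfolding Pmax_def
  proof (intro CollectI conjI allI impI)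
    show "strong_module V c X" "X \<subset> M" using X by auto
    fix M'' assume "strong_module V c M'' \<and> M'' \<subset> M"
    then have M'': "strong_module V c M''" "M'' \<subset> M" by auto
    show "\<not> X \<subset> M''"
    proof
      assume XM: "X \<subset> M''"
      have "u \<in> M''" using X(1) XM by blast
      then have "card M'' \<le> card X" using X(2) M'' by blast
      moreover have "card X < card M''" using psubset_card_mono[OF strong_fin[OF M''(1)] XM] .
      ultimately show False by simp
    qed
  qed
  then show ?thesis using X by blast
qed

lemma Pmax_strong: "X \<in> Pmax V c M \<Longrightarrow> strong_module V c X \<and> X \<subset> M"
  unfolding Pmax_def by auto

lemma child_disj: assumes "X \<in> Pmax V c M" "Y \<in> Pmax V c M" "X \<inter> Y \<noteq> {}"
  shows "X = Y"
proof -
  have "X \<subseteq> Y \<or> Y \<subseteq> X" using assms Pmax_strong strong_cmp by blast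
  then show ?thesis using assms unfolding Pmax_def by blast
qed

lemma ch: assumes "strong_module V c M" "u \<in> M" "M \<noteq> {u}"
  shows "ch M u \<in> Pmax V c M" "u \<in> ch M u"
  using someI_ex[OF child_ex[OF assms, unfolded Bex_def]] unfolding ch_def by auto

lemma ch_eq: assumes "X \<in> Pmax V c M" "u \<in> X" shows "ch M u = X"
proof -
  have "ch M u \<in> Pmax V c M \<and> u \<in> ch M u"
    unfolding ch_def using someI[of "\<lambda>X. X \<in> Pmax V c M \<and> u \<in> X", OF conjI[OF assms]] .
  then show ?thesis using assms child_disj by blast
qed

lemma lca_ch: assumes "u \<in> V" "v \<in> V" "u \<noteq> v"
  shows "ch (lca u v) u \<in> Pmax V c (lca u v)" "ch (lca u v) v \<in> Pmax V c (lca u v)"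
    "ch (lca u v) u \<noteq> ch (lca u v) v" "u \<in> ch (lca u v) u" "v \<in> ch (lca u v) v"
    "card (lca u v) \<noteq> 1"
proof -
  note L = lca[OF assms(1,2)]
  have n1: "lca u v \<noteq> {u}" "lca u v \<noteq> {v}" using L assms(3) by auto
  show A: "ch (lca u v) u \<in> Pmax V c (lca u v)" "u \<in> ch (lca u v) u"
    using ch[OF L(1) L(2) n1(1)] by auto
  show B: "ch (lca u v) v \<in> Pmax V c (lca u v)" "v \<in> ch (lca u v) v"
    using ch[OF L(1) L(3) n1(2)] by auto
  show "ch (lca u v) u \<noteq> ch (lca u v) v"
  proof
    assume "ch (lca u v) u = ch (lca u v) v"
    then have "lca u v \<subseteq> ch (lca u v) u" using L(4) A B Pmax_strong by metis
    then show False using A Pmax_strong by blast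
  qed
  show "card (lca u v) \<noteq> 1" using L assms(3) by (auto simp: card_Suc_eq)
qed

lemma lca_strict: assumes "x \<in> V" "y \<in> V" "z \<in> V" "lca x y \<subset> lca y z"
  shows "lca x z = lca y z" "ch (lca y z) x = ch (lca y z) y"
proof -
  note A = lca[OF assms(1,2)] and B = lca[OF assms(2,3)] and C = lca[OF assms(1,3)]
  have zA: "z \<notin> lca x y" using A B assms(4) by blast
  have "lca x z \<subseteq> lca y z" using C(4)[OF B(1)] B A assms(4) by blast
  moreover have "lca x y \<subseteq> lca x z \<or> lca x z \<subseteq> lca x y" using strong_cmp A C by blast
  then have "lca x y \<subseteq> lca x z" using zA C by blast
  then have "lca y z \<subseteq> lca x z" using B(4)[OF C(1)] A C by blast
  ultimately show "lca x z = lca y z" by blast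
  have nB: "lca y z \<noteq> {y}" using assms(4) A by auto
  note X = ch[OF B(1) B(2) nB]
  have "lca x y \<subseteq> ch (lca y z) y \<or> ch (lca y z) y \<subseteq> lca x y"
    using strong_cmp A X Pmax_strong by blast
  moreover have "\<not> ch (lca y z) y \<subset> lca x y"
    using X(1) A(1) assms(4) unfolding Pmax_def by blast
  ultimately have "lca x y \<subseteq> ch (lca y z) y" by blast
  then have "x \<in> ch (lca y z) y" using A by blast
  then show "ch (lca y z) x = ch (lca y z) y" using ch_eq X by blast
qed

definition rel :: "('a set \<Rightarrow> 'a set \<Rightarrow> nat) \<Rightarrow> 'a \<Rightarrow> 'a \<Rightarrow> bool" where
  "rel F u v \<longleftrightarrow> u \<noteq> v \<and> F (lca u v) (ch (lca u v) u) < F (lca u v) (ch (lca u v) v)"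

definition injF :: "('a set \<Rightarrow> 'a set \<Rightarrow> nat) \<Rightarrow> bool" where
  "injF F \<longleftrightarrow> (\<forall>M. strong_module V c M \<and> card M \<noteq> 1 \<longrightarrow> inj_on (F M) (Pmax V c M))"

lemma rel_total: assumes "injF F" "u \<in> V" "v \<in> V" "u \<noteq> v"
  shows "rel F u v \<or> rel F v u"
proof -
  note L = lca[OF assms(2,3)] and C = lca_ch[OF assms(2-4)]
  have "F (lca u v) (ch (lca u v) u) \<noteq> F (lca u v) (ch (lca u v) v)"
    using assms(1) L(1) C unfolding injF_def inj_on_def by blast
  then show ?thesis unfolding rel_def using assms(4) lca_sym[of v u] by auto
qed

lemma rel_trans: assumes "u \<in> V" "v \<in> V" "w \<in> V" "rel F u v" "rel F v w"
  shows "rel F u w"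
proof -
  have uv: "u \<noteq> v" and vw: "v \<noteq> w" using assms(4,5) unfolding rel_def by auto
  have r1: "F (lca u v) (ch (lca u v) u) < F (lca u v) (ch (lca u v) v)"
    using assms(4) unfolding rel_def by auto
  have r2: "F (lca v w) (ch (lca v w) v) < F (lca v w) (ch (lca v w) w)"
    using assms(5) unfolding rel_def by auto
  have uw: "u \<noteq> w"
  proof
    assume "u = w" then show False using r1 r2 lca_sym[of u v] by simp
  qed
  have "lca u v \<subseteq> lca v w \<or> lca v w \<subseteq> lca u v"
    using strong_cmp lca(1-3)[OF assms(1,2)] lca(1-3)[OF assms(2,3)] by blast
  then consider "lca u v = lca v w" | "lca u v \<subset> lca v w" | "lca v w \<subset> lca u v" by blast
  then show ?thesis
  proof cases
    case 1
    have s: "lca u w \<subseteq> lca u v"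
      using lca(4)[OF assms(1,3) lca(1)[OF assms(1,2)] lca(2)[OF assms(1,2)]] lca(3)[OF assms(2,3)] 1
      by simp
    then consider "lca u w = lca u v" | "lca u w \<subset> lca u v" by blast
    then show ?thesis
    proof cases
      case same: 1
      show ?thesis unfolding rel_def using uw r1 r2 1 same by simp
    next
      case 2
      then have "lca u w \<subset> lca w v" using 1 lca_sym[of v w] by simp
      from lca_strict(2)[OF assms(1,3,2) this] have "ch (lca w v) u = ch (lca w v) w" .
      then show ?thesis using r1 r2 1 uw lca_sym[of v w] by simp
    qed
  next
    case 2
    have e: "lca u w = lca v w" "ch (lca v w) u = ch (lca v w) v"
      using lca_strict[OF assms(1,2,3) 2] by auto
    show ?thesis unfolding rel_def using uw r2 e by simp
  next
    case 3
    then have "lca w v \<subset> lca v u" by (simp add: lca_sym)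
    from lca_strict[OF assms(3,2,1) this]
    have e: "lca w u = lca v u" "ch (lca v u) w = ch (lca v u) v" by auto
    have e2: "lca u w = lca u v" "ch (lca u v) w = ch (lca u v) v"
      using e lca_sym[of w u] lca_sym[of v u] by auto
    show ?thesis unfolding rel_def using uw r1 e2 by simp
  qed
qed

definition rk :: "('a \<Rightarrow> 'a \<Rightarrow> bool) \<Rightarrow> 'a \<Rightarrow> nat" where
  "rk R u = Suc (card {v\<in>V. R v u})"

lemma rk_props:
  assumes irr0: "\<forall>u. \<not> R u u"
    and tr0: "\<forall>u\<in>V. \<forall>v\<in>V. \<forall>w\<in>V. R u v \<longrightarrow> R v w \<longrightarrow> R u w"
    and tot0: "\<forall>u\<in>V. \<forall>v\<in>V. u \<noteq> v \<longrightarrow> R u v \<or> R v u"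
  shows "\<And>u v. u \<in> V \<Longrightarrow> v \<in> V \<Longrightarrow> R u v \<longleftrightarrow> rk R u < rk R v"
    and "bij_betw (rk R) V {1..card V}"
proof -
  have irr: "\<And>u. \<not> R u u" using irr0 by blast
  have tr: "\<And>u v w. u \<in> V \<Longrightarrow> v \<in> V \<Longrightarrow> w \<in> V \<Longrightarrow> R u v \<Longrightarrow> R v w \<Longrightarrow> R u w"
    using tr0 by blast
  have tot: "\<And>u v. u \<in> V \<Longrightarrow> v \<in> V \<Longrightarrow> u \<noteq> v \<Longrightarrow> R u v \<or> R v u"
    using tot0 by blast
  have lt: "rk R u < rk R v" if "u \<in> V" "v \<in> V" "R u v" for u v
  proof -
    have "{x\<in>V. R x u} \<subseteq> {x\<in>V. R x v}"
    proof
      fix x assume "x \<in> {x\<in>V. R x u}"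
      then have "x \<in> V" "R x u" by auto
      then show "x \<in> {x\<in>V. R x v}" using tr[of x u v] that by simp
    qed
    moreover have "u \<in> {x\<in>V. R x v}" "u \<notin> {x\<in>V. R x u}" using that irr by auto
    ultimately have "{x\<in>V. R x u} \<subset> {x\<in>V. R x v}" by blast
    then have "card {x\<in>V. R x u} < card {x\<in>V. R x v}"
      by (rule psubset_card_mono[rotated]) (simp add: finV)
    then show ?thesis unfolding rk_def by simp
  qed
  show iff: "R u v \<longleftrightarrow> rk R u < rk R v" if "u \<in> V" "v \<in> V" for u v
  proof
    assume "rk R u < rk R v"
    then have "u \<noteq> v" "\<not> rk R v < rk R u" by auto
    moreover have "R u v \<or> R v u" if "u \<noteq> v" using tot[OF \<open>u \<in> V\<close> \<open>v \<in> V\<close> that] .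
    ultimately show "R u v" using lt[OF that(2,1)] by auto
  qed (rule lt[OF that])
  have inj: "inj_on (rk R) V"
  proof (rule inj_onI)
    fix u v assume "u \<in> V" "v \<in> V" "rk R u = rk R v"
    then show "u = v"
    proof (cases "u = v")
      case False
      assume a: "u \<in> V" "v \<in> V" "rk R u = rk R v"
      then have "R u v \<or> R v u" using tot False by simp
      then show ?thesis using lt[of u v] lt[of v u] a by auto
    qed
  qed
  have sub: "rk R ` V \<subseteq> {1..card V}"
  proof
    fix x assume "x \<in> rk R ` V"
    then obtain u where u: "u \<in> V" "x = rk R u" by blast
    have "{v\<in>V. R v u} \<subseteq> V - {u}" using irr by auto
    then have "card {v\<in>V. R v u} \<le> card (V - {u})" by (intro card_mono) (auto simp: finV)
    also have "\<dots> < card V" using u finV by (meson card_Diff1_less)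
    finally show "x \<in> {1..card V}" using u unfolding rk_def by auto
  qed
  have "card (rk R ` V) = card {1..card V}" using card_image[OF inj] by simp
  then have "rk R ` V = {1..card V}" using sub by (intro card_subset_eq) auto
  then show "bij_betw (rk R) V {1..card V}" using inj unfolding bij_betw_def by blast
qed

lemma rel_rk:
  assumes "injF F"
  shows "\<And>u v. u \<in> V \<Longrightarrow> v \<in> V \<Longrightarrow> rel F u v \<longleftrightarrow> rk (rel F) u < rk (rel F) v"
    and "bij_betw (rk (rel F)) V {1..card V}"
proof -
  have irr: "\<forall>u. \<not> rel F u u" unfolding rel_def by simp
  have tr: "\<forall>u\<in>V. \<forall>v\<in>V. \<forall>w\<in>V. rel F u v \<longrightarrow> rel F v w \<longrightarrow> rel F u w"
    using rel_trans by blast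
  have tot: "\<forall>u\<in>V. \<forall>v\<in>V. u \<noteq> v \<longrightarrow> rel F u v \<or> rel F v u"
    using rel_total[OF assms] by blast
  show "\<And>u v. u \<in> V \<Longrightarrow> v \<in> V \<Longrightarrow> rel F u v \<longleftrightarrow> rk (rel F) u < rk (rel F) v"
    using rk_props(1)[OF irr tr tot] by blast
  show "bij_betw (rk (rel F)) V {1..card V}"
    using rk_props(2)[OF irr tr tot] .
qed

lemma qc_eq: assumes "X \<in> Pmax V c M" "Y \<in> Pmax V c M" "X \<noteq> Y" "x \<in> X" "y \<in> Y"
  shows "quot_color c X Y = c x y"
proof -
  have disj: "X \<inter> Y = {}" using child_disj assms(1-3) by blast
  have mX: "is_module V c X" and mY: "is_module V c Y"
    using assms(1,2) Pmax_strong unfolding strong_module_def by auto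
  have XV: "X \<subseteq> V" and YV: "Y \<subseteq> V" using mX mY unfolding is_module_def by auto
  have gen: "c a b = c x y" if "a \<in> X" "b \<in> Y" for a b
  proof -
    have "b \<in> V - X" using that disj YV by blast
    then have "c a b = c x b" using mX that(1) assms(4) unfolding is_module_def by blast
    also have "\<dots> = c b x" using symc XV YV assms(4) that(2) disj by blast
    also have "x \<in> V - Y" using assms(4) disj XV by blast
    then have "c b x = c y x" using mY that(2) assms(5) unfolding is_module_def by blast
    also have "\<dots> = c x y" using symc XV YV assms(4,5) disj by blast
    finally show ?thesis .
  qed
  have "(SOME x. x \<in> X) \<in> X" using assms(4) by (rule someI)
  moreover have "(SOME y. y \<in> Y) \<in> Y" using assms(5) by (rule someI)
  ultimately show ?thesis unfolding quot_color_def using gen by blast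
qed

end

lemma perm_ex:
  assumes l: "bij_betw l V {1..n::nat}" and r: "bij_betw r V {1..n}"
  shows "\<exists>\<pi>. \<pi> permutes {1..n} \<and> (\<forall>u\<in>V. inv \<pi> (l u) = r u)"
proof -
  define \<sigma> where "\<sigma> x = (if x \<in> {1..n} then r (inv_into V l x) else x)" for x
  have "bij_betw (r \<circ> inv_into V l) {1..n} {1..n}"
    using bij_betw_trans[OF bij_betw_inv_into[OF l] r] .
  then have "bij_betw \<sigma> {1..n} {1..n}"
    by (rule bij_betw_cong[THEN iffD1, rotated]) (simp add: \<sigma>_def)
  then have sp: "\<sigma> permutes {1..n}"
    by (rule bij_imp_permutes) (auto simp add: \<sigma>_def)
  have "\<forall>u\<in>V. \<sigma> (l u) = r u"
  proof
    fix u assume u: "u \<in> V"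
    have "l u \<in> {1..n}" using l u bij_betwE by blast
    moreover have "inv_into V l (l u) = u" using bij_betw_imp_inj_on[OF l] u by (rule inv_into_f_f)
    ultimately show "\<sigma> (l u) = r u" unfolding \<sigma>_def by simp
  qed
  moreover have "inv (inv \<sigma>) = \<sigma>" using sp by (rule permutes_inv_inv)
  ultimately show ?thesis using permutes_inv[OF sp] by metis
qed


theorem proposition4p9:
  fixes V :: "'a set" and c :: "'a \<Rightarrow> 'a \<Rightarrow> 'c"
  assumes "complete_edge_colored V c"
    and "\<forall>M. strong_module V c M \<longrightarrow>
           ce_perm_graph (quot_vertices V c M) (quot_color c)"
  shows "ce_perm_graph V c"
proof -
  interpret ceg V c using assms(1) by unfold_locales
  define P where "P M = Pmax V c M" for M
  define qc where "qc = quot_color c"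
  have Q: "\<forall>M. \<exists>l. strong_module V c M \<and> card M \<noteq> 1 \<longrightarrow>
      bij_betw l (P M) {1..card (P M)} \<and>
      (\<forall>i\<in>colors (P M) qc. \<exists>\<pi>. \<pi> permutes {1..card (P M)} \<and>
            simple_perm_graph (P M) (\<lambda>X Y. qc X Y = i) l \<pi>)"
  proof
    fix M
    show "\<exists>l. strong_module V c M \<and> card M \<noteq> 1 \<longrightarrow>
      bij_betw l (P M) {1..card (P M)} \<and>
      (\<forall>i\<in>colors (P M) qc. \<exists>\<pi>. \<pi> permutes {1..card (P M)} \<and>
            simple_perm_graph (P M) (\<lambda>X Y. qc X Y = i) l \<pi>)"
    proof (cases "strong_module V c M \<and> card M \<noteq> 1")
      case True
      then have "quot_vertices V c M = P M" unfolding quot_vertices_def P_def by simp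
      moreover have "ce_perm_graph (quot_vertices V c M) qc" using assms(2) True unfolding qc_def by blast
      ultimately have "ce_perm_graph (P M) qc" by simp
      then show ?thesis unfolding ce_perm_graph_def by blast
    qed blast
  qed
  obtain LM where LM: "\<forall>M. strong_module V c M \<and> card M \<noteq> 1 \<longrightarrow>
      bij_betw (LM M) (P M) {1..card (P M)} \<and>
      (\<forall>i\<in>colors (P M) qc. \<exists>\<pi>. \<pi> permutes {1..card (P M)} \<and>
            simple_perm_graph (P M) (\<lambda>X Y. qc X Y = i) (LM M) \<pi>)"
    using choice[OF Q] by blast
  have Q2: "\<forall>M. \<exists>f. \<forall>i. strong_module V c M \<and> card M \<noteq> 1 \<and> i \<in> colors (P M) qc \<longrightarrow>
      f i permutes {1..card (P M)} \<and> simple_perm_graph (P M) (\<lambda>X Y. qc X Y = i) (LM M) (f i)"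
  proof
    fix M
    have "\<forall>i. \<exists>\<pi>. strong_module V c M \<and> card M \<noteq> 1 \<and> i \<in> colors (P M) qc \<longrightarrow>
      \<pi> permutes {1..card (P M)} \<and> simple_perm_graph (P M) (\<lambda>X Y. qc X Y = i) (LM M) \<pi>"
      using LM by blast
    then show "\<exists>f. \<forall>i. strong_module V c M \<and> card M \<noteq> 1 \<and> i \<in> colors (P M) qc \<longrightarrow>
      f i permutes {1..card (P M)} \<and> simple_perm_graph (P M) (\<lambda>X Y. qc X Y = i) (LM M) (f i)"
      by (rule choice)
  qed
  obtain PI where PI: "\<forall>M i. strong_module V c M \<and> card M \<noteq> 1 \<and> i \<in> colors (P M) qc \<longrightarrow>
      PI M i permutes {1..card (P M)} \<and> simple_perm_graph (P M) (\<lambda>X Y. qc X Y = i) (LM M) (PI M i)"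
    using choice[OF Q2] by blast
  define Fi where "Fi i M X = (if i \<in> colors (P M) qc then inv (PI M i) (LM M X) else LM M X)" for i M X
  have injL: "injF LM"
    unfolding injF_def using LM bij_betw_imp_inj_on unfolding P_def by blast
  have injFi: "injF (Fi i)" for i
    unfolding injF_def
  proof (intro allI impI)
    fix M assume M: "strong_module V c M \<and> card M \<noteq> 1"
    then have iL: "inj_on (LM M) (P M)" using LM bij_betw_imp_inj_on by blast
    show "inj_on (Fi i M) (Pmax V c M)"
    proof (cases "i \<in> colors (P M) qc")
      case True
      then have "PI M i permutes {1..card (P M)}" using PI M by blast
      then have "inj (inv (PI M i))" using permutes_inv permutes_inj by blast
      then show ?thesis using iL True unfolding Fi_def P_def inj_on_def by auto
    next
      case False
      then show ?thesis using iL unfolding Fi_def P_def inj_on_def by auto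
    qed
  qed
  have key: "c u v = i \<longleftrightarrow> rel (Fi i) u v" if uv: "u \<in> V" "v \<in> V" "rel LM v u" for u v i
  proof -
    have ne: "u \<noteq> v" using uv(3) unfolding rel_def by auto
    define M where "M = lca u v"
    have Mvu: "lca v u = M" unfolding M_def by (rule lca_sym)
    note C = lca_ch[OF uv(1,2) ne, folded M_def]
    have sM: "strong_module V c M" using lca(1)[OF uv(1,2)] unfolding M_def .
    define Xu where "Xu = ch M u"
    define Xv where "Xv = ch M v"
    have lt: "LM M Xv < LM M Xu" using uv(3) unfolding rel_def Mvu Xu_def Xv_def by simp
    have qq: "qc Xu Xv = c u v" unfolding qc_def Xu_def Xv_def using qc_eq C by blast
    have XP: "Xu \<in> P M" "Xv \<in> P M" "Xu \<noteq> Xv" using C unfolding P_def Xu_def Xv_def by auto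
    have relEq: "rel (Fi i) u v \<longleftrightarrow> Fi i M Xu < Fi i M Xv"
      unfolding rel_def M_def[symmetric] Xu_def Xv_def using ne by simp
    show ?thesis
    proof (cases "i \<in> colors (P M) qc")
      case True
      then have "simple_perm_graph (P M) (\<lambda>X Y. qc X Y = i) (LM M) (PI M i)"
        using PI sM C(6) by blast
      then have "qc Xu Xv = i \<longleftrightarrow> inv (PI M i) (LM M Xu) < inv (PI M i) (LM M Xv)"
        unfolding simple_perm_graph_def using XP(1,2) lt by blast
      then show ?thesis using relEq True qq unfolding Fi_def by simp
    next
      case False
      have "qc Xu Xv \<in> colors (P M) qc" unfolding colors_def using XP by blast
      then have "c u v \<noteq> i" using False qq by auto
      then show ?thesis using relEq False lt unfolding Fi_def by simp
    qed
  qed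
  define l where "l = rk (rel LM)"
  have lb: "bij_betw l V {1..card V}" unfolding l_def by (rule rel_rk(2)[OF injL])
  show ?thesis
    unfolding ce_perm_graph_def
  proof (rule exI[of _ l], intro conjI ballI)
    show "bij_betw l V {1..card V}" by (rule lb)
    fix i assume "i \<in> colors V c"
    have rb: "bij_betw (rk (rel (Fi i))) V {1..card V}" by (rule rel_rk(2)[OF injFi])
    obtain \<pi> where pi: "\<pi> permutes {1..card V}" "\<forall>u\<in>V. inv \<pi> (l u) = rk (rel (Fi i)) u"
      using perm_ex[OF lb rb] by blast
    have "simple_perm_graph V (\<lambda>u v. c u v = i) l \<pi>"
      unfolding simple_perm_graph_def
    proof (intro ballI impI)
      fix u v assume u: "u \<in> V" and v: "v \<in> V" and gt: "l v < l u"
      have "rel LM v u" using rel_rk(1)[OF injL v u] gt unfolding l_def by simp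
      then have "c u v = i \<longleftrightarrow> rel (Fi i) u v" using key u v by blast
      also have "\<dots> \<longleftrightarrow> rk (rel (Fi i)) u < rk (rel (Fi i)) v" by (rule rel_rk(1)[OF injFi u v])
      finally show "c u v = i \<longleftrightarrow> inv \<pi> (l u) < inv \<pi> (l v)" using pi(2) u v by simp
    qed
    then show "\<exists>\<pi>. \<pi> permutes {1..card V} \<and> simple_perm_graph V (\<lambda>u v. c u v = i) l \<pi>"
      using pi(1) by blast
  qed
qed

end
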